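(* Let $G=(V_G,E_G)$ and $H=(V_H,E_H)$ be graphs on $n$ vertices with partitions $V_G=L_G\cup R_G$, $V_H=L_H\cup R_H$ into sets of size $n/2$, let $\alpha\ge1$ be a constant, let $d=\max\{2|E_H|/n,\ C\log^3 n\}$ for a sufficiently large constant $C$, and let $V_G^{<\alpha d}=\{u\in V_G:\deg(u,G)<\alpha d\}$. Suppose $|V_G^{<\alpha d}|\ge n/\alpha$. Let $\pi$ be uniformly random in $\Pi_{LR}$ and $F=G\boxplus_\pi H$. Consider the algorithm that sorts the vertices of $F$ by their degree in $F$, lets $L'$ be the $\lceil n/(3\alpha)\rceil$ vertices of smallest degree and $R'=V_F\setminus L'$, and outputs $(L',R')$. Then $(L',R')$ is a $\Theta(1)$-balanced cut, and with high probability (over $\pi$) the number of edges of $F$ between $L'$ and $R'$ is $O(dn)$.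
   Context: $\Pi_{LR}$ is the set of bijections $\pi:V_H\to V_G$ with $\pi(L_H)=L_G$, $\pi(R_H)=R_G$. $F=G\boxplus_\pi H$ is the graph on $V_G$ with edge set $E_G\cup\{(\pi(x),\pi(y)):(x,y)\in E_H\}$. A cut $(S,T)$ is $b$-balanced if $|S|,|T|\ge bn$; $\Theta(1)$-balanced means $b$-balanced for some constant $b>0$ (depending only on $\alpha$). *)

theory Defs
  imports "HOL-Probability.Probability"
begin

text \<open>Simple undirected graphs on a finite vertex set V (of naturals), edges as a
symmetric irreflexive relation E with E \<subseteq> V \<times> V. Each undirected edge appears as
both (u,v) and (v,u).\<close>

definition simple_graph :: "nat set \<Rightarrow> (nat \<times> nat) set \<Rightarrow> bool" where
  "simple_graph V E \<longleftrightarrow> finite V \<and> E \<subseteq> V \<times> V \<and> sym E \<and> irrefl E"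

definition num_edges :: "(nat \<times> nat) set \<Rightarrow> nat" where
  "num_edges E = card E div 2"

definition deg :: "(nat \<times> nat) set \<Rightarrow> nat \<Rightarrow> nat" where
  "deg E u = card {v. (u, v) \<in> E}"

definition half_partition :: "nat set \<Rightarrow> nat set \<Rightarrow> nat set \<Rightarrow> bool" where
  "half_partition V L R \<longleftrightarrow> L \<union> R = V \<and> L \<inter> R = {} \<and> card L = card R"

text \<open>\<Pi>_LR: bijections VH \<rightarrow> VG mapping LH onto LG and RH onto RG
(made canonical outside VH via extensional).\<close>
definition Pi_LR :: "nat set \<Rightarrow> nat set \<Rightarrow> nat set \<Rightarrow> nat set \<Rightarrow> nat set \<Rightarrow> nat set
    \<Rightarrow> (nat \<Rightarrow> nat) set" where
  "Pi_LR VH LH RH VG LG RG =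
     {\<pi> \<in> extensional VH. bij_betw \<pi> VH VG \<and> \<pi> ` LH = LG \<and> \<pi> ` RH = RG}"

definition boxplus :: "(nat \<times> nat) set \<Rightarrow> (nat \<Rightarrow> nat) \<Rightarrow> (nat \<times> nat) set \<Rightarrow> (nat \<times> nat) set" where
  "boxplus EG \<pi> EH = EG \<union> {(\<pi> x, \<pi> y) | x y. (x, y) \<in> EH}"

text \<open>L' is a possible output of the sorting algorithm: k vertices of smallest degree
(ties broken arbitrarily).\<close>
definition smallest_degree_set :: "nat set \<Rightarrow> (nat \<times> nat) set \<Rightarrow> nat \<Rightarrow> nat set \<Rightarrow> bool" where
  "smallest_degree_set V E k L' \<longleftrightarrow> L' \<subseteq> V \<and> card L' = k \<and>
     (\<forall>u\<in>L'. \<forall>v\<in>V - L'. deg E u \<le> deg E v)"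

definition cut_edges :: "(nat \<times> nat) set \<Rightarrow> nat set \<Rightarrow> nat set \<Rightarrow> nat" where
  "cut_edges E S T = card (E \<inter> (S \<times> T))"

definition balanced_cut :: "real \<Rightarrow> nat \<Rightarrow> nat set \<Rightarrow> nat set \<Rightarrow> bool" where
  "balanced_cut b n S T \<longleftrightarrow> real (card S) \<ge> b * real n \<and> real (card T) \<ge> b * real n"

end

theory Submission
imports Defs
begin

lemma fin_row: "finite A \<Longrightarrow> finite {v. (u, v) \<in> A}"
  by (rule finite_subset[of _ "snd ` A"]) force+

lemma deg_union_le: "finite A \<Longrightarrow> finite B \<Longrightarrow> deg (A \<union> B) u \<le> deg A u + deg B u"
proof -
  assume a: "finite A" "finite B"
  have "{v. (u, v) \<in> A \<union> B} = {v. (u, v) \<in> A} \<union> {v. (u, v) \<in> B}" by auto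
  then show ?thesis unfolding deg_def using card_Un_le by metis
qed

lemma sum_deg: "finite A \<Longrightarrow> finite S \<Longrightarrow> (\<Sum>u\<in>S. deg A u) = card (A \<inter> S \<times> UNIV)"
proof -
  assume a: "finite A" "finite S"
  have "A \<inter> S \<times> UNIV = (SIGMA u:S. {v. (u, v) \<in> A})" by auto
  moreover have "card (SIGMA u:S. {v. (u, v) \<in> A}) = (\<Sum>u\<in>S. card {v. (u, v) \<in> A})"
    by (rule card_SigmaI) (use a fin_row in auto)
  ultimately show ?thesis unfolding deg_def by simp
qed

lemma sum_deg_le: "finite A \<Longrightarrow> finite S \<Longrightarrow> (\<Sum>u\<in>S. deg A u) \<le> card A"
  by (simp add: sum_deg card_mono)

lemma balance:
  fixes \<alpha> :: real
  assumes "\<alpha> \<ge> 1" "finite V" "half_partition V L R" "card V = n"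
    "smallest_degree_set V E k L'" "k = nat \<lceil>real n / (3 * \<alpha>)\<rceil>"
  shows "balanced_cut (min (1/(3*\<alpha>)) (1/6)) n L' (V - L')"
proof -
  have LR: "L \<subseteq> V" "R \<subseteq> V" "L \<inter> R = {}" "L \<union> R = V" "card L = card R"
    using assms(3) unfolding half_partition_def by auto
  have "n = 2 * card L" using card_Un_disjoint[of L R] LR assms(2,4)
    by (metis finite_subset mult_2)
  hence n: "n = 0 \<or> n \<ge> 2" by auto
  have L': "L' \<subseteq> V" "card L' = k" using assms(5) unfolding smallest_degree_set_def by auto
  have c: "card (V - L') = n - k" using L' assms(2,4) by (simp add: card_Diff_subset finite_subset)
  have a0: "\<alpha> > 0" using assms(1) by simp
  have x0: "real n / (3*\<alpha>) \<ge> 0" using a0 by simp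
  have ke: "real k = real_of_int \<lceil>real n / (3*\<alpha>)\<rceil>" using assms(6) x0 by simp
  have kge: "real k \<ge> real n / (3*\<alpha>)" using ke by simp
  have klt: "real k < real n / (3*\<alpha>) + 1" using ke ceiling_correct[of "real n / (3*\<alpha>)"] by linarith
  have "real n / (3*\<alpha>) \<le> real n / 3" using assms(1)
    by (intro divide_left_mono) auto
  hence klt2: "real k < real n / 3 + 1" using klt by linarith
  have kn: "k \<le> n"
  proof -
    have "card L' \<le> card V" using L' assms(2) card_mono by blast
    thus ?thesis using L' assms(4) by simp
  qed
  have b1: "min (1/(3*\<alpha>)) (1/6) * real n \<le> real k"
  proof -
    have "min (1/(3*\<alpha>)) (1/6) * real n \<le> 1/(3*\<alpha>) * real n"
      by (intro mult_right_mono) auto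
    thus ?thesis using kge by simp
  qed
  have b2: "min (1/(3*\<alpha>)) (1/6) * real n \<le> real (n - k)"
  proof -
    have "min (1/(3*\<alpha>)) (1/6) * real n \<le> 1/6 * real n"
      by (intro mult_right_mono) auto
    moreover have "1/6 * real n \<le> real n - real k"
      using n klt2 kn
    proof -
      { assume "n = 0" hence ?thesis using kn by simp }
      moreover { assume "n \<ge> 2" hence ?thesis using klt2 by simp }
      ultimately show "1/6 * real n \<le> real n - real k" using n by blast
    qed
    ultimately show ?thesis using kn by simp
  qed
  show ?thesis unfolding balanced_cut_def using b1 b2 c L' by simp
qed

lemma cutbound:
  fixes \<alpha> d :: real
  assumes al: "\<alpha> \<ge> 1" and fV: "finite VG" and cV: "card VG = n" and sg: "simple_graph VG EG"
    and fH: "finite EH" and sds: "smallest_degree_set VG F k L'" and Fd: "F = boxplus EG \<pi> EH"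
    and kd: "k = nat \<lceil>real n/(3*\<alpha>)\<rceil>" and d1: "d \<ge> 1" and cH: "real (card EH) \<le> d*n+1"
    and n6: "real n \<ge> 6*\<alpha>"
    and Sb: "real (card {u\<in>VG. real (deg EG u) < \<alpha>*d}) \<ge> real n/\<alpha>"
  shows "real (cut_edges F L' (VG - L')) \<le> 6*\<alpha>*d*real n"
proof -
  define S where "S = {u\<in>VG. real (deg EG u) < \<alpha>*d}"
  define H' where "H' = (\<lambda>(x,y). (\<pi> x, \<pi> y)) ` EH"
  have a0: "\<alpha> > 0" using al by simp
  have d0: "d > 0" using d1 by simp
  have fS: "finite S" using fV unfolding S_def by simp
  have SV: "S \<subseteq> VG" unfolding S_def by auto
  have fH': "finite H'" using fH unfolding H'_def by simp
  have cH': "card H' \<le> card EH" unfolding H'_def using fH card_image_le by blast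
  have fEG: "finite EG" using sg fV unfolding simple_graph_def
    by (meson finite_SigmaI finite_subset)
  have FU: "F = EG \<union> H'" unfolding Fd boxplus_def H'_def by auto
  have fF: "finite F" using FU fEG fH' by simp
  have degF: "real (deg F u) \<le> real (deg EG u) + real (deg H' u)" for u
    using deg_union_le[OF fEG fH', of u] FU by simp
  have nS: "real n \<le> \<alpha> * real (card S)" using Sb a0 unfolding S_def
    by (simp add: divide_le_eq mult.commute)
  have sumEG: "(\<Sum>u\<in>S. real (deg EG u)) \<le> real (card S) * (\<alpha>*d)"
  proof -
    have "(\<Sum>u\<in>S. real (deg EG u)) \<le> (\<Sum>u\<in>S. \<alpha>*d)"
      by (rule sum_mono) (auto simp: S_def less_imp_le)
    thus ?thesis by simp
  qed
  have sumH: "(\<Sum>u\<in>S. real (deg H' u)) \<le> real (card EH)"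
  proof -
    have "(\<Sum>u\<in>S. deg H' u) \<le> card EH" using sum_deg_le[OF fH' fS] cH' by linarith
    hence "real (\<Sum>u\<in>S. deg H' u) \<le> real (card EH)" by linarith
    thus ?thesis by simp
  qed
  have sumF: "(\<Sum>u\<in>S. real (deg F u)) \<le> 3*\<alpha>*d*real (card S)"
  proof -
    have "(\<Sum>u\<in>S. real (deg F u)) \<le> (\<Sum>u\<in>S. real (deg EG u) + real (deg H' u))"
      by (rule sum_mono) (rule degF)
    also have "\<dots> = (\<Sum>u\<in>S. real (deg EG u)) + (\<Sum>u\<in>S. real (deg H' u))"
      by (simp add: sum.distrib)
    also have "\<dots> \<le> real (card S) * (\<alpha>*d) + (d * real n + 1)" using sumEG sumH cH by linarith
    also have "\<dots> \<le> real (card S) * (\<alpha>*d) + 2 * (d * real n)"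
    proof -
      have "1 \<le> real n" using n6 al by linarith
      hence "1 \<le> d * real n" using d1 by (metis mult_mono' mult_1 zero_le_one)
      thus ?thesis by linarith
    qed
    also have "\<dots> \<le> real (card S) * (\<alpha>*d) + 2 * (d * (\<alpha> * real (card S)))"
      using nS d0 by (intro add_left_mono mult_left_mono) auto
    also have "\<dots> = 3*\<alpha>*d*real (card S)" by (simp add: algebra_simps)
    finally show ?thesis .
  qed
  define D where "D = 6*\<alpha>*d"
  have D0: "D > 0" unfolding D_def using a0 d0 by simp
  define M where "M = {u\<in>S. real (deg F u) \<le> D}"
  define B where "B = S - M"
  have fB: "finite B" "B \<subseteq> S" using fS unfolding B_def by auto
  have "(\<Sum>u\<in>B. D) \<le> (\<Sum>u\<in>B. real (deg F u))"
    by (rule sum_mono) (auto simp: B_def M_def)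
  also have "\<dots> \<le> (\<Sum>u\<in>S. real (deg F u))"
    by (rule sum_mono2[OF fS fB(2)]) auto
  finally have "real (card B) * D \<le> 3*\<alpha>*d*real (card S)" using sumF by simp
  hence "real (card B) * (2 * (3*\<alpha>*d)) \<le> real (card S) * (3*\<alpha>*d)" unfolding D_def
    by (simp add: algebra_simps)
  hence cB: "2 * real (card B) \<le> real (card S)" using a0 d0
    by (simp add: mult.assoc mult_le_cancel_right)
  have MS: "M \<subseteq> S" "finite M" using fS unfolding M_def by auto
  have "card B = card S - card M" unfolding B_def using card_Diff_subset[OF MS(2,1)] .
  moreover have "card M \<le> card S" using card_mono[OF fS MS(1)] .
  ultimately have "card S = card M + card B" by simp
  hence "real (card S) \<le> 2 * real (card M)" using cB by simp
  hence "\<alpha> * real (card S) \<le> \<alpha> * (2 * real (card M))" using a0 by simp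
  hence "real n \<le> (2*\<alpha>) * real (card M)" using nS by (simp add: algebra_simps)
  hence cM: "real (card M) \<ge> real n / (2*\<alpha>)" using a0
    by (simp add: divide_le_eq mult.commute)
  have x0: "real n / (3*\<alpha>) \<ge> 0" using a0 by simp
  have ke: "real k = real_of_int \<lceil>real n / (3*\<alpha>)\<rceil>" using kd x0 by simp
  have klt: "real k < real n / (3*\<alpha>) + 1" using ke ceiling_correct[of "real n / (3*\<alpha>)"] by linarith
  have "real n / (2*\<alpha>) - real n / (3*\<alpha>) = real n / (6*\<alpha>)" using a0 by (simp add: field_simps)
  moreover have "real n / (6*\<alpha>) \<ge> 1" using n6 a0 by (simp add: le_divide_eq)
  ultimately have kM: "real k < real (card M)" using klt cM by linarith
  have L': "L' \<subseteq> VG" "card L' = k" "\<forall>u\<in>L'. \<forall>v\<in>VG - L'. deg F u \<le> deg F v"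
    using sds unfolding smallest_degree_set_def by auto
  have fL: "finite L'" using L' fV finite_subset by blast
  have allL: "real (deg F u) \<le> D" if u: "u \<in> L'" for u
  proof (rule ccontr)
    assume nu: "\<not> real (deg F u) \<le> D"
    have "M \<subseteq> L'"
    proof
      fix v assume v: "v \<in> M"
      show "v \<in> L'"
      proof (rule ccontr)
        assume "v \<notin> L'"
        hence "v \<in> VG - L'" using v MS SV by auto
        hence "deg F u \<le> deg F v" using L' u by blast
        thus False using nu v unfolding M_def by auto
      qed
    qed
    hence "card M \<le> k" using card_mono[OF fL] L' by metis
    thus False using kM by simp
  qed
  have kn: "k \<le> n" using L' fV cV card_mono by metis
  have "cut_edges F L' (VG - L') \<le> card (F \<inter> L' \<times> UNIV)"
    unfolding cut_edges_def using fF by (intro card_mono) auto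
  also have "\<dots> = (\<Sum>u\<in>L'. deg F u)" using sum_deg[OF fF fL] by simp
  finally have "real (cut_edges F L' (VG - L')) \<le> (\<Sum>u\<in>L'. real (deg F u))"
    by (metis of_nat_le_iff of_nat_sum)
  also have "\<dots> \<le> (\<Sum>u\<in>L'. D)" by (rule sum_mono) (rule allL)
  also have "\<dots> = real k * D" using L' by simp
  also have "\<dots> \<le> real n * D" using kn D0 by (intro mult_right_mono) auto
  finally show ?thesis unfolding D_def by (simp add: algebra_simps)
qed

theorem lemma12:
  fixes \<alpha> :: real
  assumes "\<alpha> \<ge> 1"
  shows "\<exists>b>0. \<exists>C0. \<forall>C\<ge>C0. \<exists>K. \<exists>\<delta> :: nat \<Rightarrow> real. (\<delta> \<longlonglongrightarrow> 0) \<and>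
    (\<forall>n VG LG RG EG VH LH RH EH.
       card VG = n \<longrightarrow> card VH = n \<longrightarrow>
       simple_graph VG EG \<longrightarrow> simple_graph VH EH \<longrightarrow>
       half_partition VG LG RG \<longrightarrow> half_partition VH LH RH \<longrightarrow>
       (let d = max (2 * real (num_edges EH) / real n) (C * (ln (real n)) ^ 3);
            k = nat \<lceil>real n / (3 * \<alpha>)\<rceil>
        in real (card {u \<in> VG. real (deg EG u) < \<alpha> * d}) \<ge> real n / \<alpha> \<longrightarrow>
           (\<forall>\<pi> \<in> Pi_LR VH LH RH VG LG RG. \<forall>L'.
              smallest_degree_set VG (boxplus EG \<pi> EH) k L' \<longrightarrow>
              balanced_cut b n L' (VG - L')) \<and>
           measure (pmf_of_set (Pi_LR VH LH RH VG LG RG))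
             {\<pi>. \<exists>L'. smallest_degree_set VG (boxplus EG \<pi> EH) k L' \<and>
                   real (cut_edges (boxplus EG \<pi> EH) L' (VG - L')) > K * d * real n}
           \<le> \<delta> n))"
proof -
  define b where "b = min (1/(3*\<alpha>)) (1/(6::real))"
  have a0: "\<alpha> > 0" using assms by simp
  have b0: "b > 0" unfolding b_def using a0 by simp
  show ?thesis
  proof (rule exI[of _ b], intro conjI b0, rule exI[of _ "1::real"], intro allI impI)
    fix C :: real assume C1: "C \<ge> 1"
    define N0 :: nat where "N0 = nat \<lceil>6*\<alpha>\<rceil> + 3"
    define \<delta> where "\<delta> = (\<lambda>n::nat. if n < N0 then 1 else (0::real))"
    have \<delta>lim: "\<delta> \<longlonglongrightarrow> 0"
    proof (rule tendsto_eventually)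
      show "\<forall>\<^sub>F n in sequentially. \<delta> n = 0"
        by (rule eventually_sequentiallyI[of N0]) (simp add: \<delta>_def)
    qed
    show "\<exists>K. \<exists>\<delta> :: nat \<Rightarrow> real. (\<delta> \<longlonglongrightarrow> 0) \<and>
    (\<forall>n VG LG RG EG VH LH RH EH.
       card VG = n \<longrightarrow> card VH = n \<longrightarrow>
       simple_graph VG EG \<longrightarrow> simple_graph VH EH \<longrightarrow>
       half_partition VG LG RG \<longrightarrow> half_partition VH LH RH \<longrightarrow>
       (let d = max (2 * real (num_edges EH) / real n) (C * (ln (real n)) ^ 3);
            k = nat \<lceil>real n / (3 * \<alpha>)\<rceil>
        in real (card {u \<in> VG. real (deg EG u) < \<alpha> * d}) \<ge> real n / \<alpha> \<longrightarrow>
           (\<forall>\<pi> \<in> Pi_LR VH LH RH VG LG RG. \<forall>L'.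
              smallest_degree_set VG (boxplus EG \<pi> EH) k L' \<longrightarrow>
              balanced_cut b n L' (VG - L')) \<and>
           measure (pmf_of_set (Pi_LR VH LH RH VG LG RG))
             {\<pi>. \<exists>L'. smallest_degree_set VG (boxplus EG \<pi> EH) k L' \<and>
                   real (cut_edges (boxplus EG \<pi> EH) L' (VG - L')) > K * d * real n}
           \<le> \<delta> n))"
    proof (rule exI[of _ "6*\<alpha>"], rule exI[of _ \<delta>], intro conjI \<delta>lim allI impI)
      fix n VG LG RG EG VH LH RH EH
      assume cVG: "card VG = n" and cVH: "card VH = n" and sgG: "simple_graph VG EG"
        and sgH: "simple_graph VH EH" and hpG: "half_partition VG LG RG"
        and hpH: "half_partition VH LH RH"
      have fVG: "finite VG" using sgG unfolding simple_graph_def by simp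
      have fVH: "finite VH" using sgH unfolding simple_graph_def by simp
      have fEH: "finite EH" using sgH fVH unfolding simple_graph_def
        by (meson finite_SigmaI finite_subset)
      define d where "d = max (2 * real (num_edges EH) / real n) (C * (ln (real n)) ^ 3)"
      define k where "k = nat \<lceil>real n / (3 * \<alpha>)\<rceil>"
      have main: "real (card {u \<in> VG. real (deg EG u) < \<alpha> * d}) \<ge> real n / \<alpha> \<longrightarrow>
           (\<forall>\<pi> \<in> Pi_LR VH LH RH VG LG RG. \<forall>L'.
              smallest_degree_set VG (boxplus EG \<pi> EH) k L' \<longrightarrow>
              balanced_cut b n L' (VG - L')) \<and>
           measure (pmf_of_set (Pi_LR VH LH RH VG LG RG))
             {\<pi>. \<exists>L'. smallest_degree_set VG (boxplus EG \<pi> EH) k L' \<and>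
                   real (cut_edges (boxplus EG \<pi> EH) L' (VG - L')) > (6*\<alpha>) * d * real n}
           \<le> \<delta> n"
      proof (intro impI conjI ballI allI)
        fix \<pi> L' assume "smallest_degree_set VG (boxplus EG \<pi> EH) k L'"
        then show "balanced_cut b n L' (VG - L')"
          unfolding b_def using balance[OF assms fVG hpG cVG _ k_def] by blast
      next
        assume Sb: "real (card {u \<in> VG. real (deg EG u) < \<alpha> * d}) \<ge> real n / \<alpha>"
        show "measure (pmf_of_set (Pi_LR VH LH RH VG LG RG))
             {\<pi>. \<exists>L'. smallest_degree_set VG (boxplus EG \<pi> EH) k L' \<and>
                   real (cut_edges (boxplus EG \<pi> EH) L' (VG - L')) > (6*\<alpha>) * d * real n}
           \<le> \<delta> n"
        proof (cases "n < N0")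
          case True
          then show ?thesis unfolding \<delta>_def by (simp add: measure_pmf.prob_le_1)
        next
          case False
          hence nN: "n \<ge> N0" by simp
          have n6: "real n \<ge> 6*\<alpha>" using nN unfolding N0_def by linarith
          have n3: "real n \<ge> 3" using nN unfolding N0_def by simp
          have n0: "real n > 0" using n3 by simp
          have ln1: "ln (real n) \<ge> 1" using n3 exp_le by (simp add: ln_ge_iff)
          have "1 \<le> ln (real n) ^ 3" using ln1 by (simp add: one_le_power)
          hence "1 \<le> C * ln (real n) ^ 3" using C1 by (metis mult_mono' mult_1 zero_le_one)
          hence d1: "d \<ge> 1" unfolding d_def by linarith
          have "card EH \<le> 2 * num_edges EH + 1" unfolding num_edges_def by simp
          hence "real (card EH) \<le> 2 * real (num_edges EH) + 1" by linarith
          moreover have "2 * real (num_edges EH) / real n \<le> d" unfolding d_def by simp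
          hence "2 * real (num_edges EH) \<le> d * real n" using n0 by (simp add: divide_le_eq)
          ultimately have cH: "real (card EH) \<le> d * real n + 1" by linarith
          have "{\<pi>. \<exists>L'. smallest_degree_set VG (boxplus EG \<pi> EH) k L' \<and>
                   real (cut_edges (boxplus EG \<pi> EH) L' (VG - L')) > (6*\<alpha>) * d * real n} = {}"
          proof (rule equals0I)
            fix \<pi> assume "\<pi> \<in> {\<pi>. \<exists>L'. smallest_degree_set VG (boxplus EG \<pi> EH) k L' \<and>
                   real (cut_edges (boxplus EG \<pi> EH) L' (VG - L')) > (6*\<alpha>) * d * real n}"
            then obtain L' where L': "smallest_degree_set VG (boxplus EG \<pi> EH) k L'"
              "real (cut_edges (boxplus EG \<pi> EH) L' (VG - L')) > (6*\<alpha>) * d * real n" by blast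
            have "real (cut_edges (boxplus EG \<pi> EH) L' (VG - L')) \<le> 6*\<alpha>*d*real n"
              using cutbound[OF assms fVG cVG sgG fEH L'(1) refl k_def d1 cH n6 Sb] .
            thus False using L'(2) by simp
          qed
          then show ?thesis unfolding \<delta>_def using False by (simp only: measure_empty) simp
        qed
      qed
      show "let d = max (2 * real (num_edges EH) / real n) (C * (ln (real n)) ^ 3);
            k = nat \<lceil>real n / (3 * \<alpha>)\<rceil>
        in real (card {u \<in> VG. real (deg EG u) < \<alpha> * d}) \<ge> real n / \<alpha> \<longrightarrow>
           (\<forall>\<pi> \<in> Pi_LR VH LH RH VG LG RG. \<forall>L'.
              smallest_degree_set VG (boxplus EG \<pi> EH) k L' \<longrightarrow>
              balanced_cut b n L' (VG - L')) \<and>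
           measure (pmf_of_set (Pi_LR VH LH RH VG LG RG))
             {\<pi>. \<exists>L'. smallest_degree_set VG (boxplus EG \<pi> EH) k L' \<and>
                   real (cut_edges (boxplus EG \<pi> EH) L' (VG - L')) > (6*\<alpha>) * d * real n}
           \<le> \<delta> n"
        unfolding Let_def using main unfolding d_def k_def .
    qed
  qed
qed

end
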